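(* Let $n$ be sufficiently large, $m=\lceil n/\log^8 n\rceil$ and $p=1/(m^{1/2}\log^2 m)$. Let $H_R,H_B$ be graphs on vertex set $[m]$, let $H_R',H_B'$ be obtained from them by deleting every edge lying in a triangle, and let $\pi_R,\pi_B:[n]\to[m]$ be maps. Let $H_0$ be the graph on $[n]$ where distinct $u,v$ are adjacent iff $\{\pi_R(u),\pi_R(v)\}\in E(H_R')$ (then the edge is called red) or $\{\pi_B(u),\pi_B(v)\}\in E(H_B')$ (then called blue); an edge may be both. A pair $\{u,v\}\in\binom{[n]}{2}$ is closed by a red (resp. blue) cherry if there is $w\in[n]$ with $\{u,w\},\{v,w\}$ both red (resp. both blue) edges of $H_0$. If $H_R$ has maximum degree at most $2pm$ and $|\pi_R^{-1}(x)|\le 2n/m$ for all $x\in[m]$, then at most $n^2/\log n$ pairs in $\binom{[n]}2$ are closed by a red cherry in $H_0$. Similarly, if $H_B$ has maximum degree at most $2pm$ and $|\pi_B^{-1}(x)|\le 2n/m$ for all $x\in[m]$, then at most $n^2/\log n$ pairs are closed by a blue cherry in $H_0$.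
   Context: Logarithms are natural; $\log^k n$ means $(\log n)^k$. *)

theory Defs
  imports Complex_Main
begin

definition is_graph_on :: "nat \<Rightarrow> nat set set \<Rightarrow> bool" where
  "is_graph_on m H \<longleftrightarrow> (\<forall>e\<in>H. e \<subseteq> {1..m} \<and> card e = 2)"

definition triangle_pruned :: "nat set set \<Rightarrow> nat set set" where
  "triangle_pruned H = {e \<in> H. \<not> (\<exists>a b c. e = {a, b} \<and> {a, c} \<in> H \<and> {b, c} \<in> H)}"

definition max_degree_le :: "nat \<Rightarrow> nat set set \<Rightarrow> real \<Rightarrow> bool" where
  "max_degree_le m H d \<longleftrightarrow> (\<forall>x\<in>{1..m}. real (card {y. {x, y} \<in> H}) \<le> d)"

definition col_edge :: "nat \<Rightarrow> nat set set \<Rightarrow> (nat \<Rightarrow> nat) \<Rightarrow> nat \<Rightarrow> nat \<Rightarrow> bool" where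
  "col_edge n H \<pi> u v \<longleftrightarrow> u \<in> {1..n} \<and> v \<in> {1..n} \<and> u \<noteq> v \<and> {\<pi> u, \<pi> v} \<in> triangle_pruned H"

definition cherry_closed_pairs :: "nat \<Rightarrow> nat set set \<Rightarrow> (nat \<Rightarrow> nat) \<Rightarrow> nat set set" where
  "cherry_closed_pairs n H \<pi> =
     {P. \<exists>u v. P = {u, v} \<and> u \<in> {1..n} \<and> v \<in> {1..n} \<and> u \<noteq> v \<and>
            (\<exists>w\<in>{1..n}. col_edge n H \<pi> u w \<and> col_edge n H \<pi> v w)}"

end

theory Submission
  imports Defs "HOL-Real_Asymp.Real_Asymp"
begin

lemma cherry_bound:
  fixes d f :: real
  assumes G: "is_graph_on m H" and pim: "\<pi> ` {1..n} \<subseteq> {1..m}"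
    and D: "\<forall>x\<in>{1..m}. real (card {y. {x, y} \<in> H}) \<le> d"
    and F: "\<forall>x\<in>{1..m}. real (card {u\<in>{1..n}. \<pi> u = x}) \<le> f"
    and d0: "0 \<le> d" and f0: "0 \<le> f"
  shows "real (card (cherry_closed_pairs n H \<pi>)) \<le> real m * d^2 * f^2"
proof -
  define N where "N c = {y. {c, y} \<in> H}" for c
  define Fb where "Fb a = {u\<in>{1..n}. \<pi> u = a}" for a
  define S where "S = (\<Union>c\<in>{1..m}. \<Union>a\<in>N c. \<Union>b\<in>N c. (\<lambda>(u,v). {u,v}) ` (Fb a \<times> Fb b))"
  have finN: "finite (N c)" for c
  proof -
    have "N c \<subseteq> {1..m}"
    proof
      fix y assume "y \<in> N c"
      then have "{c, y} \<in> H" by (simp add: N_def)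
      then have "{c,y} \<subseteq> {1..m}" using G by (auto simp: is_graph_on_def)
      then show "y \<in> {1..m}" by auto
    qed
    then show ?thesis using finite_subset by blast
  qed
  have finF: "finite (Fb a)" for a by (simp add: Fb_def)
  have sub: "cherry_closed_pairs n H \<pi> \<subseteq> S"
  proof
    fix P assume "P \<in> cherry_closed_pairs n H \<pi>"
    then obtain u v w where P: "P = {u,v}" and w: "w \<in> {1..n}"
      and e1: "col_edge n H \<pi> u w" and e2: "col_edge n H \<pi> v w"
      unfolding cherry_closed_pairs_def by blast
    have h1: "{\<pi> u, \<pi> w} \<in> H" "u \<in> {1..n}" using e1 by (auto simp: col_edge_def triangle_pruned_def)
    have h2: "{\<pi> v, \<pi> w} \<in> H" "v \<in> {1..n}" using e2 by (auto simp: col_edge_def triangle_pruned_def)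
    have c: "\<pi> w \<in> {1..m}" using w pim by blast
    have a: "\<pi> u \<in> N (\<pi> w)" using h1 by (simp add: N_def insert_commute)
    have b: "\<pi> v \<in> N (\<pi> w)" using h2 by (simp add: N_def insert_commute)
    have "P \<in> (\<lambda>(u,v). {u,v}) ` (Fb (\<pi> u) \<times> Fb (\<pi> v))"
      using P h1 h2 by (auto simp: Fb_def)
    then show "P \<in> S" unfolding S_def using a b c by blast
  qed
  have finS: "finite S" unfolding S_def using finN finF by auto
  have "card (cherry_closed_pairs n H \<pi>) \<le> card S" using sub finS card_mono by blast
  also have "card S \<le> (\<Sum>c\<in>{1..m}. card (\<Union>a\<in>N c. \<Union>b\<in>N c. (\<lambda>(u,v). {u,v}) ` (Fb a \<times> Fb b)))"
    unfolding S_def by (rule card_UN_le) simp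
  also have "\<dots> \<le> (\<Sum>c\<in>{1..m}. \<Sum>a\<in>N c. card (\<Union>b\<in>N c. (\<lambda>(u,v). {u,v}) ` (Fb a \<times> Fb b)))"
    by (intro sum_mono card_UN_le finN)
  also have "\<dots> \<le> (\<Sum>c\<in>{1..m}. \<Sum>a\<in>N c. \<Sum>b\<in>N c. card ((\<lambda>(u,v). {u,v}) ` (Fb a \<times> Fb b)))"
    by (intro sum_mono card_UN_le finN)
  also have "\<dots> \<le> (\<Sum>c\<in>{1..m}. \<Sum>a\<in>N c. \<Sum>b\<in>N c. card (Fb a) * card (Fb b))"
    by (intro sum_mono) (metis card_cartesian_product card_image_le finF finite_cartesian_product)
  finally have "real (card (cherry_closed_pairs n H \<pi>)) \<le> real (\<Sum>c\<in>{1..m}. \<Sum>a\<in>N c. \<Sum>b\<in>N c. card (Fb a) * card (Fb b))"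
    by (simp only: of_nat_le_iff)
  also have "\<dots> = (\<Sum>c\<in>{1..m}. \<Sum>a\<in>N c. \<Sum>b\<in>N c. real (card (Fb a)) * real (card (Fb b)))"
    by simp
  also have "\<dots> \<le> (\<Sum>c\<in>{1..m}. \<Sum>a\<in>N c. \<Sum>b\<in>N c. f * f)"
  proof (intro sum_mono)
    fix c a b assume c: "c \<in> {1..m}" and a: "a \<in> N c" and b: "b \<in> N c"
    have "a \<in> {1..m}" "b \<in> {1..m}"
      using a b G by (auto simp: N_def is_graph_on_def)
    then have "real (card (Fb a)) \<le> f" "real (card (Fb b)) \<le> f" using F by (auto simp: Fb_def)
    then show "real (card (Fb a)) * real (card (Fb b)) \<le> f * f"
      by (intro mult_mono) auto
  qed
  also have "\<dots> = (\<Sum>c\<in>{1..m}. real (card (N c))^2 * f^2)"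
    by (simp add: power2_eq_square mult.assoc)
  also have "\<dots> \<le> (\<Sum>c\<in>{1..m}. d^2 * f^2)"
  proof (intro sum_mono mult_right_mono)
    fix c assume "c \<in> {1..m}"
    then have "real (card (N c)) \<le> d" using D by (simp add: N_def)
    then show "real (card (N c))^2 \<le> d^2" by (intro power_mono) auto
  qed simp
  also have "\<dots> = real m * d^2 * f^2" by simp
  finally show ?thesis .
qed

lemma asym: "eventually (\<lambda>n::nat. 2 \<le> real n / ln (real n)^8 \<and> 7 \<le> ln (real n) \<and>
   ln (real n) \<le> 2 * ln (real n / ln (real n)^8)) sequentially"
proof -
  have "eventually (\<lambda>x::real. 2 \<le> x / ln x^8 \<and> 7 \<le> ln x \<and> ln x \<le> 2 * ln (x / ln x^8)) at_top"
  proof (intro eventually_conj)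
    show "eventually (\<lambda>x::real. 2 \<le> x / ln x^8) at_top" by real_asymp
    show "eventually (\<lambda>x::real. 7 \<le> ln x) at_top" by real_asymp
    show "eventually (\<lambda>x::real. ln x \<le> 2 * ln (x / ln x^8)) at_top" by real_asymp
  qed
  from eventually_compose_filterlim[OF this filterlim_real_sequentially] show ?thesis .
qed

lemma final_ineq:
  fixes n m :: real
  assumes m: "n / ln n ^ 8 \<le> m" and h: "2 \<le> n / ln n ^ 8" and l7: "7 \<le> ln n"
    and l2: "ln n \<le> 2 * ln (n / ln n ^ 8)"
  shows "16 * n^2 / (ln m)^4 \<le> n^2 / ln n"
proof -
  have mpos: "0 < n / ln n ^ 8" using h by linarith
  have lm: "ln (n / ln n ^ 8) \<le> ln m" using mpos m by simp
  have "ln n / 2 \<le> ln m" using l2 lm by linarith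
  moreover have "0 \<le> ln n / 2" using l7 by simp
  ultimately have p4: "(ln n / 2)^4 \<le> (ln m)^4" by (intro power_mono)
  have "16 * ln n \<le> (ln n / 2)^4"
  proof -
    have "343 \<le> ln n ^ 3" using power_mono[OF l7, of 3] by simp
    then have "256 * ln n \<le> ln n ^ 3 * ln n" using l7 by (intro mult_right_mono) auto
    then show ?thesis by (simp add: power_divide eval_nat_numeral)
  qed
  with p4 have key: "16 * ln n \<le> (ln m)^4" by linarith
  have lnpos: "0 < ln n" using l7 by simp
  have lm4: "0 < (ln m)^4" using \<open>ln n / 2 \<le> ln m\<close> lnpos by simp
  have "16 * n^2 / (ln m)^4 = n^2 * (16 / (ln m)^4)" by simp
  also have "\<dots> \<le> n^2 * (1 / ln n)"
    using key lnpos lm4 by (intro mult_left_mono) (auto simp: divide_simps)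
  finally show ?thesis by simp
qed

theorem lemma5p1:
  shows "\<exists>N::nat. \<forall>n\<ge>N. \<forall>(HR::nat set set) (HB::nat set set) (\<pi>R::nat \<Rightarrow> nat) (\<pi>B::nat \<Rightarrow> nat).
    let m = nat \<lceil>real n / (ln (real n)) ^ 8\<rceil>;
        p = 1 / (sqrt (real m) * (ln (real m)) ^ 2)
    in is_graph_on m HR \<and> is_graph_on m HB \<and>
       \<pi>R ` {1..n} \<subseteq> {1..m} \<and> \<pi>B ` {1..n} \<subseteq> {1..m} \<longrightarrow>
       ((max_degree_le m HR (2 * p * real m) \<and>
         (\<forall>x\<in>{1..m}. real (card {u\<in>{1..n}. \<pi>R u = x}) \<le> 2 * real n / real m))
          \<longrightarrow> real (card (cherry_closed_pairs n HR \<pi>R)) \<le> (real n)^2 / ln (real n)) \<and>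
       ((max_degree_le m HB (2 * p * real m) \<and>
         (\<forall>x\<in>{1..m}. real (card {u\<in>{1..n}. \<pi>B u = x}) \<le> 2 * real n / real m))
          \<longrightarrow> real (card (cherry_closed_pairs n HB \<pi>B)) \<le> (real n)^2 / ln (real n))"
proof -
  obtain N where N: "\<And>n. n \<ge> N \<Longrightarrow> 2 \<le> real n / ln (real n)^8 \<and> 7 \<le> ln (real n) \<and>
      ln (real n) \<le> 2 * ln (real n / ln (real n)^8)"
    using asym unfolding eventually_sequentially by blast
  have one: "real (card (cherry_closed_pairs n H \<pi>)) \<le> (real n)^2 / ln (real n)"
    if nN: "n \<ge> N" and m_def: "m = nat \<lceil>real n / (ln (real n)) ^ 8\<rceil>"
      and p_def: "p = 1 / (sqrt (real m) * (ln (real m)) ^ 2)"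
      and G: "is_graph_on m H" and pim: "\<pi> ` {1..n} \<subseteq> {1..m}"
      and D: "max_degree_le m H (2 * p * real m)"
      and F: "\<forall>x\<in>{1..m}. real (card {u\<in>{1..n}. \<pi> u = x}) \<le> 2 * real n / real m"
    for n m p H \<pi>
  proof -
    note Nn = N[OF nN]
    have mge: "real n / ln (real n)^8 \<le> real m" unfolding m_def
      by (rule real_nat_ceiling_ge)
    have m2: "2 \<le> real m" using mge Nn by linarith
    have lmpos: "0 < ln (real m)" using m2 by simp
    have p0: "0 \<le> p" using p_def lmpos m2 by simp
    have "real (card (cherry_closed_pairs n H \<pi>)) \<le> real m * (2 * p * real m)^2 * (2 * real n / real m)^2"
      by (rule cherry_bound[OF G pim _ F]) (use D p0 m2 in \<open>auto simp: max_degree_le_def\<close>)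
    also have "\<dots> = 16 * (real n)^2 / (ln (real m))^4"
      using m2 lmpos by (simp add: p_def field_simps power2_eq_square eval_nat_numeral)
    also have "\<dots> \<le> (real n)^2 / ln (real n)"
      using final_ineq[OF mge] Nn by blast
    finally show ?thesis .
  qed
  show ?thesis
    unfolding Let_def
    apply (intro exI[of _ N] allI impI conjI)
     apply (elim conjE)
     apply (rule one[OF _ refl refl]; assumption)
    apply (elim conjE)
    apply (rule one[OF _ refl refl]; assumption)
    done
qed

end
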